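(* Let $M\in\mathbb N$ and let $X(M)$ be the subshift defined below. Let $G_1'$ be the graph with one vertex and $2M+1$ loops named $\lambda,\rho_1,\dots,\rho_M,\eta_1,\dots,\eta_M$, and $G_1''$ the graph with one vertex and $M+2$ loops named $\lambda,\xi,\rho_1,\dots,\rho_M$; let $X_{G_1'},X_{G_1''}$ be their edge shifts (so $\mathcal B_n(X_{G_1'})$, resp. $\mathcal B_n(X_{G_1''})$, is the set of all words of length $n$ over the corresponding loop names). Then for every $n\ge1$ there exist bijections $$\{x\in P_n(X(M)):\text{the multiplier of }x\text{ is positive, neutral, or }\lambda^k\text{ for some }k\ge1\}\longrightarrow\mathcal B_n(X_{G_1'})$$ and $$\{x\in P_n(X(M)):\text{the multiplier of }x\text{ is negative, neutral, or a non-identity element of the submonoid generated by }\rho_1,\dots,\rho_M\}\longrightarrow\mathcal B_n(X_{G_1''}).$$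
   Context: Let $\Sigma_1=\{\lambda,\xi,\rho_1,\dots,\rho_M,\eta_1,\dots,\eta_M\}$. $\mathcal M_1(M)$ is the monoid with zero generated by $\Sigma_1$ and an identity $\mathbf 1$, subject only to the relations $\lambda\rho_i=\mathbf 1$, $\lambda\eta_i=0$, $\xi\eta_i=\mathbf 1$, $\xi\rho_i=0$ ($1\le i\le M$), $\mathbf 1$ is the identity and $0$ is absorbing; no other relations. $\mathit{red}:\Sigma_1^*\to\mathcal M_1(M)$ sends a word to the product of its letters (empty word to $\mathbf 1$). $X(M)=\{x\in\Sigma_1^{\mathbb Z}:\mathit{red}(x_i\cdots x_j)\neq 0\ \forall i\le j\}$ with shift $\sigma$; $P_n(X(M))=\{x\in X(M):\sigma^nx=x\}$, and the periodic defining block of $x\in P_n(X(M))$ is $x_0\cdots x_{n-1}$. $\mathcal M_1^+$ is the submonoid generated by $\rho_i,\eta_i$ and $\mathcal M_1^-$ the submonoid generated by $\lambda,\xi$. Every block $\alpha$ can be written $\alpha=\alpha_+\alpha_-$ with $\mathit{red}(\alpha_+)\in\mathcal M_1^+$, $\mathit{red}(\alpha_-)\in\mathcal M_1^-$; the multiplier of $\alpha$ (and of $\alpha^\infty$) is $\mathit{red}(\alpha_-\alpha_+)$, called positive if in $\mathcal M_1^+\setminus\{\mathbf 1\}$, negative if in $\mathcal M_1^-\setminus\{\mathbf 1\}$, neutral if equal to $\mathbf 1$. *)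

theory Defs
  imports Main
begin

datatype sym = Lam | Xi | Rho nat | Eta nat

definition Sigma1 :: "nat \<Rightarrow> sym set" where
  "Sigma1 M = {Lam, Xi} \<union> Rho ` {1..M} \<union> Eta ` {1..M}"

text \<open>The free monoid with zero on Sigma_1: words (Some w) plus a zero (None).
  mcong M is the congruence generated by the defining relations of M_1(M)
  (zero is absorbing, so it is a congruence on the free monoid with zero).\<close>
inductive mcong :: "nat \<Rightarrow> sym list option \<Rightarrow> sym list option \<Rightarrow> bool" for M where
  refl: "mcong M u u"
| sym: "mcong M u v \<Longrightarrow> mcong M v u"
| trans: "mcong M u v \<Longrightarrow> mcong M v w \<Longrightarrow> mcong M u w"
| lam_rho: "i \<in> {1..M} \<Longrightarrow> mcong M (Some (u @ [Lam, Rho i] @ v)) (Some (u @ v))"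
| xi_eta: "i \<in> {1..M} \<Longrightarrow> mcong M (Some (u @ [Xi, Eta i] @ v)) (Some (u @ v))"
| lam_eta: "i \<in> {1..M} \<Longrightarrow> mcong M (Some (u @ [Lam, Eta i] @ v)) None"
| xi_rho: "i \<in> {1..M} \<Longrightarrow> mcong M (Some (u @ [Xi, Rho i] @ v)) None"

text \<open>Elements of M_1(M) are congruence classes.\<close>
type_synonym melem = "sym list option set"

definition red :: "nat \<Rightarrow> sym list \<Rightarrow> melem" where
  "red M w = {v. mcong M (Some w) v}"

definition mzero :: "nat \<Rightarrow> melem" where
  "mzero M = {v. mcong M None v}"

definition mone :: "nat \<Rightarrow> melem" where
  "mone M = red M []"

definition Mplus :: "nat \<Rightarrow> melem set" where
  "Mplus M = {red M w | w. set w \<subseteq> Rho ` {1..M} \<union> Eta ` {1..M}}"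

definition Mminus :: "nat \<Rightarrow> melem set" where
  "Mminus M = {red M w | w. set w \<subseteq> {Lam, Xi}}"

definition Mrho :: "nat \<Rightarrow> melem set" where
  "Mrho M = {red M w | w. set w \<subseteq> Rho ` {1..M}}"

definition multiplier :: "nat \<Rightarrow> sym list \<Rightarrow> melem" where
  "multiplier M \<alpha> =
     (let d = (SOME (a, b). \<alpha> = a @ b \<and> red M a \<in> Mplus M \<and> red M b \<in> Mminus M)
      in red M (snd d @ fst d))"

definition mult_positive :: "nat \<Rightarrow> sym list \<Rightarrow> bool" where
  "mult_positive M \<alpha> \<longleftrightarrow> multiplier M \<alpha> \<in> Mplus M - {mone M}"

definition mult_negative :: "nat \<Rightarrow> sym list \<Rightarrow> bool" where
  "mult_negative M \<alpha> \<longleftrightarrow> multiplier M \<alpha> \<in> Mminus M - {mone M}"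

definition mult_neutral :: "nat \<Rightarrow> sym list \<Rightarrow> bool" where
  "mult_neutral M \<alpha> \<longleftrightarrow> multiplier M \<alpha> = mone M"

definition block :: "(int \<Rightarrow> sym) \<Rightarrow> int \<Rightarrow> int \<Rightarrow> sym list" where
  "block x i j = map x [i..j]"

definition XM :: "nat \<Rightarrow> (int \<Rightarrow> sym) set" where
  "XM M = {x. (\<forall>i. x i \<in> Sigma1 M) \<and> (\<forall>i j. i \<le> j \<longrightarrow> red M (block x i j) \<noteq> mzero M)}"

definition shift :: "(int \<Rightarrow> sym) \<Rightarrow> int \<Rightarrow> sym" where
  "shift x = (\<lambda>i. x (i + 1))"

definition Pn :: "nat \<Rightarrow> nat \<Rightarrow> (int \<Rightarrow> sym) set" where
  "Pn M n = {x \<in> XM M. (shift ^^ n) x = x}"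

definition defblock :: "nat \<Rightarrow> (int \<Rightarrow> sym) \<Rightarrow> sym list" where
  "defblock n x = map (\<lambda>k. x (int k)) [0..<n]"

definition loopsG1' :: "nat \<Rightarrow> sym set" where
  "loopsG1' M = {Lam} \<union> Rho ` {1..M} \<union> Eta ` {1..M}"

definition loopsG1'' :: "nat \<Rightarrow> sym set" where
  "loopsG1'' M = {Lam, Xi} \<union> Rho ` {1..M}"

definition Bn :: "sym set \<Rightarrow> nat \<Rightarrow> sym list set" where
  "Bn L n = {w. length w = n \<and> set w \<subseteq> L}"

end

theory Submission
  imports Defs
begin

definition CS :: "nat \<Rightarrow> sym set" where "CS M = Rho ` {1..M} \<union> Eta ` {1..M}"
definition OS :: "sym set" where "OS = {Lam, Xi}"

definition okp :: "sym \<Rightarrow> sym \<Rightarrow> bool" where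
  "okp a b \<longleftrightarrow> (a = Lam \<and> (\<exists>i. b = Rho i)) \<or> (a = Xi \<and> (\<exists>i. b = Eta i))"

fun stp :: "nat \<Rightarrow> sym \<Rightarrow> sym list option \<Rightarrow> sym list option" where
  "stp M a None = None"
| "stp M a (Some v) = (if a \<in> OS then (case v of [] \<Rightarrow> Some [a]
      | b # v' \<Rightarrow> if b \<in> CS M then (if okp a b then Some v' else None) else Some (a # v))
     else Some (a # v))"

definition nf :: "nat \<Rightarrow> sym list \<Rightarrow> sym list option" where
  "nf M w = foldr (stp M) w (Some [])"

lemma OS_CS: "a \<in> OS \<Longrightarrow> a \<notin> CS M"
  by (auto simp: OS_def CS_def)

lemma Sigma1_eq: "Sigma1 M = OS \<union> CS M"
  by (auto simp: Sigma1_def OS_def CS_def)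

lemma nf_Nil[simp]: "nf M [] = Some []" by (simp add: nf_def)
lemma nf_Cons: "nf M (a # w) = stp M a (nf M w)" by (simp add: nf_def)
lemma nf_append: "nf M (u @ v) = foldr (stp M) u (nf M v)" by (simp add: nf_def)
lemma foldr_None[simp]: "foldr (stp M) u None = None" by (induction u) auto

lemma stp_notOS: "a \<notin> OS \<Longrightarrow> stp M a (Some v) = Some (a # v)" by simp

lemma nf_assoc: "nf M (u @ v) = (case nf M u of None \<Rightarrow> None | Some u' \<Rightarrow> nf M (u' @ v))"
proof (induction u)
  case Nil then show ?case by simp
next
  case (Cons a u)
  show ?case
  proof (cases "nf M u")
    case None then show ?thesis using Cons by (simp add: nf_Cons)
  next
    case (Some u')
    have L: "nf M ((a # u) @ v) = stp M a (nf M (u' @ v))" using Cons Some by (simp add: nf_Cons)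
    show ?thesis
    proof (cases "a \<in> OS")
      case False then show ?thesis using L Some by (simp add: nf_Cons)
    next
      case aO: True
      show ?thesis
      proof (cases u')
        case Nil then show ?thesis using L Some aO by (simp add: nf_Cons)
      next
        case (Cons b u'')
        show ?thesis
        proof (cases "b \<in> CS M")
          case bC: True
          have bO: "b \<notin> OS" using bC OS_CS by blast
          show ?thesis
          proof (cases "nf M (u'' @ v)")
            case None then show ?thesis using L Some aO Cons bC bO by (simp add: nf_Cons)
          next
            case (Some y) then show ?thesis using L \<open>nf M u = Some u'\<close> aO Cons bC bO by (simp add: nf_Cons)
          qed
        next
          case False then show ?thesis using L Some aO Cons by (simp add: nf_Cons)
        qed
      qed
    qed
  qed
qed

lemma nf_idem: "nf M u = Some u' \<Longrightarrow> nf M u' = Some u'"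
  using nf_assoc[of M u "[]"] by simp

lemma nf_cong_left: "nf M u = nf M u' \<Longrightarrow> nf M (u @ v) = nf M (u' @ v)"
proof -
  assume h: "nf M u = nf M u'"
  show ?thesis
  proof (cases "nf M u")
    case None then show ?thesis using h nf_assoc[of M u v] nf_assoc[of M u' v] by simp
  next
    case (Some x) then show ?thesis using h nf_assoc[of M u v] nf_assoc[of M u' v] by simp
  qed
qed

lemma nf_cong_right: "nf M v = nf M v' \<Longrightarrow> nf M (u @ v) = nf M (u @ v')"
  by (simp add: nf_append)

lemma nf_Some_left: "nf M u = Some u' \<Longrightarrow> nf M (u @ v) = nf M (u' @ v)"
  by (rule nf_cong_left) (simp add: nf_idem)

lemma nf_Some_right: "nf M v = Some v' \<Longrightarrow> nf M (u @ v) = nf M (u @ v')"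
  by (rule nf_cong_right) (simp add: nf_idem)

lemma nf_suffix: "nf M (u @ v) \<noteq> None \<Longrightarrow> nf M v \<noteq> None"
  by (cases "nf M v") (auto simp: nf_append)

lemma nf_prefix: "nf M (u @ v) \<noteq> None \<Longrightarrow> nf M u \<noteq> None"
  by (auto simp: nf_assoc[of M u v] split: option.splits)

lemma nf_norm: "set c \<subseteq> CS M \<Longrightarrow> set q \<subseteq> OS \<Longrightarrow> nf M (c @ q) = Some (c @ q)"
proof (induction c)
  case Nil
  then show ?case
  proof (induction q)
    case Nil then show ?case by simp
  next
    case (Cons a q)
    then show ?case by (cases q) (auto simp: nf_Cons dest: OS_CS)
  qed
next
  case (Cons a c)
  then show ?case using OS_CS by (auto simp: nf_Cons)
qed

lemma nf_normC: "set c \<subseteq> CS M \<Longrightarrow> nf M c = Some c"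
  using nf_norm[of c M "[]"] by simp
lemma nf_normO: "set q \<subseteq> OS \<Longrightarrow> nf M q = Some q"
  using nf_norm[of "[]" M q] by simp

lemma split_uniq: "set c \<subseteq> CS M \<Longrightarrow> set q \<subseteq> OS \<Longrightarrow> set c' \<subseteq> CS M \<Longrightarrow> set q' \<subseteq> OS
   \<Longrightarrow> c @ q = c' @ q' \<Longrightarrow> c = c' \<and> q = q'"
proof (induction c arbitrary: c')
  case Nil
  then show ?case by (cases c') (auto dest: OS_CS)
next
  case (Cons a c)
  then show ?case by (cases c') (auto dest: OS_CS)
qed

lemma nf_shape: "set w \<subseteq> Sigma1 M \<Longrightarrow> nf M w \<noteq> None \<Longrightarrow>
   \<exists>c q. nf M w = Some (c @ q) \<and> set c \<subseteq> CS M \<and> set q \<subseteq> OS"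
proof (induction w)
  case Nil then show ?case by auto
next
  case (Cons a w)
  have nz: "nf M w \<noteq> None" using Cons.prems by (cases "nf M w") (auto simp: nf_Cons)
  then obtain c q where co: "nf M w = Some (c @ q)" "set c \<subseteq> CS M" "set q \<subseteq> OS"
    using Cons by auto
  have aS: "a \<in> OS \<or> a \<in> CS M" using Cons.prems Sigma1_eq by auto
  show ?case
  proof (cases "a \<in> OS")
    case False
    then show ?thesis using co aS by (rule_tac x="a#c" in exI, rule_tac x=q in exI) (auto simp: nf_Cons)
  next
    case True
    show ?thesis
    proof (cases c)
      case Nil
      then show ?thesis using co True 
        by (rule_tac x="[]" in exI, rule_tac x="a#q" in exI) (cases q, auto simp: nf_Cons dest: OS_CS)
    next
      case (Cons b c')
      then show ?thesis using co True Cons.prems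
        by (rule_tac x="c'" in exI, rule_tac x="q" in exI) (auto simp: nf_Cons split: if_splits)
    qed
  qed
qed

lemma oc_shape: "set q \<subseteq> OS \<Longrightarrow> set c \<subseteq> CS M \<Longrightarrow> nf M (q @ c) \<noteq> None \<Longrightarrow>
   \<exists>m. nf M (q @ c) = Some m \<and> (set m \<subseteq> CS M \<or> set m \<subseteq> OS)"
proof (induction q)
  case Nil then show ?case using nf_normC by auto
next
  case (Cons a q)
  have nz: "nf M (q @ c) \<noteq> None" using Cons.prems by (cases "nf M (q @ c)") (auto simp: nf_Cons)
  then obtain m where m: "nf M (q @ c) = Some m" "set m \<subseteq> CS M \<or> set m \<subseteq> OS" using Cons by auto
  have aO: "a \<in> OS" using Cons.prems by auto
  show ?case
  proof (cases m)
    case Nil then show ?thesis using m aO by (auto simp: nf_Cons)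
  next
    case (Cons b m')
    then show ?thesis using m aO Cons.prems by (auto simp: nf_Cons split: if_splits dest: OS_CS)
  qed
qed

lemma nf_pair: "b \<in> OS \<Longrightarrow> a \<in> CS M \<Longrightarrow> nf M (u @ [b, a] @ v) = (if okp b a then nf M (u @ v) else None)"
proof -
  assume h: "b \<in> OS" "a \<in> CS M"
  have "a \<notin> OS" using h OS_CS by blast
  then show ?thesis using h by (cases "nf M v") (auto simp: nf_append nf_Cons)
qed

fun NF :: "nat \<Rightarrow> sym list option \<Rightarrow> sym list option" where
  "NF M None = None" | "NF M (Some w) = nf M w"

lemma stp_lam_rho: "i \<in> {1..M} \<Longrightarrow> stp M Lam (stp M (Rho i) X) = X"
  by (cases X) (auto simp: OS_def CS_def okp_def)
lemma stp_xi_eta: "i \<in> {1..M} \<Longrightarrow> stp M Xi (stp M (Eta i) X) = X"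
  by (cases X) (auto simp: OS_def CS_def okp_def)
lemma stp_lam_eta: "i \<in> {1..M} \<Longrightarrow> stp M Lam (stp M (Eta i) (Some v)) = None"
  by (auto simp: OS_def CS_def okp_def)
lemma stp_xi_rho: "i \<in> {1..M} \<Longrightarrow> stp M Xi (stp M (Rho i) (Some v)) = None"
  by (auto simp: OS_def CS_def okp_def)

lemma nf_two: "nf M (u @ [a, b] @ v) = foldr (stp M) u (stp M a (stp M b (nf M v)))"
  by (simp add: nf_append nf_Cons)

lemma mcong_sound: "mcong M u v \<Longrightarrow> NF M u = NF M v"
proof (induction rule: mcong.induct)
  case (lam_rho i u v) then show ?case by (simp add: nf_append nf_Cons stp_lam_rho)
next
  case (xi_eta i u v) then show ?case by (simp add: nf_append nf_Cons stp_xi_eta)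
next
  case (lam_eta i u v) then show ?case by (cases "nf M v") (simp_all only: NF.simps nf_two stp_lam_eta stp.simps(1) foldr_None)
next
  case (xi_rho i u v) then show ?case by (cases "nf M v") (simp_all only: NF.simps nf_two stp_xi_rho stp.simps(1) foldr_None)
qed auto

fun papp :: "sym list \<Rightarrow> sym list option \<Rightarrow> sym list option" where
  "papp w None = None" | "papp w (Some x) = Some (w @ x)"

lemma mcong_papp: "mcong M u v \<Longrightarrow> mcong M (papp w u) (papp w v)"
proof (induction rule: mcong.induct)
  case (refl u) then show ?case by (rule mcong.refl)
next
  case (sym u v) then show ?case using mcong.sym by blast
next
  case (trans u v x) then show ?case by (metis mcong.trans)
next
  case (lam_rho i u v) then show ?case using mcong.lam_rho[of i M "w @ u" v] by simp
next
  case (xi_eta i u v) then show ?case using mcong.xi_eta[of i M "w @ u" v] by simp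
next
  case (lam_eta i u v) then show ?case using mcong.lam_eta[of i M "w @ u" v] by simp
next
  case (xi_rho i u v) then show ?case using mcong.xi_rho[of i M "w @ u" v] by simp
qed

lemma mcong_complete: "mcong M (Some w) (NF M (Some w))"
proof (induction w)
  case Nil then show ?case by (simp add: mcong.refl)
next
  case (Cons a w)
  have h: "mcong M (Some (a # w)) (papp [a] (nf M w))"
    using mcong_papp[OF Cons, of "[a]"] by simp
  show ?case
  proof (cases "nf M w")
    case None then show ?thesis using h by (simp add: nf_Cons)
  next
    case (Some v)
    show ?thesis
    proof (cases "a \<in> OS")
      case False then show ?thesis using h Some by (simp add: nf_Cons)
    next
      case aO: True
      show ?thesis
      proof (cases v)
        case Nil then show ?thesis using h Some aO by (simp add: nf_Cons)
      next
        case (Cons b v')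
        show ?thesis
        proof (cases "b \<in> CS M")
          case False then show ?thesis using h Some aO Cons by (simp add: nf_Cons)
        next
          case bC: True
          then obtain i where i: "i \<in> {1..M}" "b = Rho i \<or> b = Eta i" by (auto simp: CS_def)
          have aa: "a = Lam \<or> a = Xi" using aO by (auto simp: OS_def)
          have r1: "mcong M (Some (a # b # v')) (NF M (Some (a # w)))"
          proof -
            have e: "nf M (a # w) = (if okp a b then Some v' else None)"
              using Some Cons aO bC by (simp add: nf_Cons)
            show ?thesis using aa i
              using mcong.lam_rho[of i M "[]" v'] mcong.xi_eta[of i M "[]" v']
                mcong.lam_eta[of i M "[]" v'] mcong.xi_rho[of i M "[]" v']
              by (auto simp: e okp_def)
          qed
          show ?thesis using h Some Cons r1 by (auto intro: mcong.trans)
        qed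
      qed
    qed
  qed
qed

lemma mcong_Some_iff: "mcong M (Some u) (Some v) \<longleftrightarrow> nf M u = nf M v"
proof
  assume "mcong M (Some u) (Some v)" then show "nf M u = nf M v" using mcong_sound by fastforce
next
  assume h: "nf M u = nf M v"
  have "mcong M (Some u) (NF M (Some u))" "mcong M (Some v) (NF M (Some v))" by (rule mcong_complete)+
  then show "mcong M (Some u) (Some v)" using h by (metis NF.simps(2) mcong.sym mcong.trans)
qed

lemma red_eq_iff: "red M u = red M v \<longleftrightarrow> nf M u = nf M v"
proof
  assume "red M u = red M v"
  then have "Some v \<in> red M u" by (simp add: red_def mcong.refl)
  then show "nf M u = nf M v" by (simp add: red_def mcong_Some_iff)
next
  assume h: "nf M u = nf M v"
  then have m: "mcong M (Some u) (Some v)" by (simp add: mcong_Some_iff)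
  show "red M u = red M v" unfolding red_def using m by (auto intro: mcong.trans mcong.sym)
qed

lemma red_zero_iff: "red M u = mzero M \<longleftrightarrow> nf M u = None"
proof
  assume "red M u = mzero M"
  then have "None \<in> red M u" by (simp add: mzero_def red_def mcong.refl)
  then show "nf M u = None" using mcong_sound by (fastforce simp: red_def)
next
  assume h: "nf M u = None"
  then have m: "mcong M (Some u) None" using mcong_complete[of M u] by simp
  show "red M u = mzero M" unfolding red_def mzero_def using m by (auto intro: mcong.trans mcong.sym)
qed

lemma red_mone_iff: "red M u = mone M \<longleftrightarrow> nf M u = Some []"
  by (simp add: mone_def red_eq_iff)

lemma Mplus_iff: "red M u \<in> Mplus M \<longleftrightarrow> (\<exists>c. nf M u = Some c \<and> set c \<subseteq> CS M)"
proof
  assume "red M u \<in> Mplus M"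
  then obtain w where "red M u = red M w" "set w \<subseteq> CS M" by (auto simp: Mplus_def CS_def)
  then show "\<exists>c. nf M u = Some c \<and> set c \<subseteq> CS M" by (auto simp: red_eq_iff nf_normC)
next
  assume "\<exists>c. nf M u = Some c \<and> set c \<subseteq> CS M"
  then obtain c where "nf M u = Some c" "set c \<subseteq> CS M" by auto
  then have "red M u = red M c" by (simp add: red_eq_iff nf_normC)
  then show "red M u \<in> Mplus M" using \<open>set c \<subseteq> CS M\<close> by (auto simp: Mplus_def CS_def)
qed

lemma Mminus_iff: "red M u \<in> Mminus M \<longleftrightarrow> (\<exists>c. nf M u = Some c \<and> set c \<subseteq> OS)"
proof
  assume "red M u \<in> Mminus M"
  then obtain w where "red M u = red M w" "set w \<subseteq> OS" by (auto simp: Mminus_def OS_def)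
  then show "\<exists>c. nf M u = Some c \<and> set c \<subseteq> OS" by (auto simp: red_eq_iff nf_normO)
next
  assume "\<exists>c. nf M u = Some c \<and> set c \<subseteq> OS"
  then obtain c where "nf M u = Some c" "set c \<subseteq> OS" by auto
  then have "red M u = red M c" by (simp add: red_eq_iff nf_normO)
  then show "red M u \<in> Mminus M" using \<open>set c \<subseteq> OS\<close> by (auto simp: Mminus_def OS_def)
qed

lemma Mrho_iff: "red M u \<in> Mrho M \<longleftrightarrow> (\<exists>c. nf M u = Some c \<and> set c \<subseteq> Rho ` {1..M})"
proof
  assume "red M u \<in> Mrho M"
  then obtain w where "red M u = red M w" "set w \<subseteq> Rho ` {1..M}" by (auto simp: Mrho_def)
  moreover then have "set w \<subseteq> CS M" by (auto simp: CS_def)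
  ultimately show "\<exists>c. nf M u = Some c \<and> set c \<subseteq> Rho ` {1..M}" by (auto simp: red_eq_iff nf_normC)
next
  assume "\<exists>c. nf M u = Some c \<and> set c \<subseteq> Rho ` {1..M}"
  then obtain c where c: "nf M u = Some c" "set c \<subseteq> Rho ` {1..M}" by auto
  then have "set c \<subseteq> CS M" by (auto simp: CS_def)
  then have "red M u = red M c" using c by (simp add: red_eq_iff nf_normC)
  then show "red M u \<in> Mrho M" using c by (auto simp: Mrho_def)
qed

lemma split_exists: "set \<alpha> \<subseteq> Sigma1 M \<Longrightarrow> nf M \<alpha> \<noteq> None \<Longrightarrow>
  \<exists>a b. \<alpha> = a @ b \<and> (\<exists>c. nf M a = Some c \<and> set c \<subseteq> CS M) \<and> (\<exists>q. nf M b = Some q \<and> set q \<subseteq> OS)"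
proof (induction \<alpha>)
  case Nil then show ?case by (rule_tac x="[]" in exI, rule_tac x="[]" in exI) simp
next
  case (Cons x \<alpha>)
  have nz: "nf M \<alpha> \<noteq> None" using Cons.prems nf_suffix[of M "[x]" \<alpha>] by simp
  then obtain a b c q where ab: "\<alpha> = a @ b" "nf M a = Some c" "set c \<subseteq> CS M" "nf M b = Some q" "set q \<subseteq> OS"
    using Cons by auto
  have xS: "x \<in> OS \<or> x \<in> CS M" using Cons.prems Sigma1_eq by auto
  have nfa: "nf M \<alpha> = nf M (c @ q)" using ab(1) nf_Some_left[OF ab(2), of b] nf_Some_right[OF ab(4), of c] by simp
  show ?case
  proof (cases "x \<in> OS")
    case False
    then show ?thesis using ab xS
      by (rule_tac x="x # a" in exI, rule_tac x=b in exI) (auto simp: nf_Cons)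
  next
    case xO: True
    show ?thesis
    proof (cases c)
      case Nil
      have "nf M (x # \<alpha>) = stp M x (Some q)" using nfa ab Nil nf_normO by (simp add: nf_Cons)
      also have "\<dots> = Some (x # q)" using xO ab by (cases q) (auto dest: OS_CS)
      finally have "nf M ([] @ x # \<alpha>) = Some (x # q)" by simp
      then show ?thesis using ab xO
        by (rule_tac x="[]" in exI, rule_tac x="x # \<alpha>" in exI) auto
    next
      case (Cons d c')
      have dC: "d \<in> CS M" using ab Cons by auto
      have "nf M \<alpha> = Some (d # c' @ q)" using nfa ab Cons nf_norm[of c M q] by simp
      then have "nf M (x # \<alpha>) = stp M x (Some (d # c' @ q))" by (simp only: nf_Cons)
      then have ok: "okp x d" using Cons.prems xO dC by (auto split: if_splits)
      have "nf M (x # a) = Some c'" using ab Cons xO dC ok by (simp add: nf_Cons)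
      then show ?thesis using ab Cons
        by (rule_tac x="x # a" in exI, rule_tac x=b in exI) auto
    qed
  qed
qed

lemma multiplier_eq:
  assumes "set \<alpha> \<subseteq> Sigma1 M" "nf M \<alpha> = Some (c @ q)" "set c \<subseteq> CS M" "set q \<subseteq> OS"
  shows "multiplier M \<alpha> = red M (q @ c)"
proof -
  let ?P = "\<lambda>(a, b). \<alpha> = a @ b \<and> red M a \<in> Mplus M \<and> red M b \<in> Mminus M"
  obtain a b where "\<alpha> = a @ b \<and> (\<exists>c. nf M a = Some c \<and> set c \<subseteq> CS M) \<and> (\<exists>q. nf M b = Some q \<and> set q \<subseteq> OS)"
    using split_exists[OF assms(1)] assms(2) by blast
  then have "?P (a, b)" by (auto simp: Mplus_iff Mminus_iff)
  then have Pd: "?P (SOME d. ?P d)" by (rule someI)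
  obtain a1 b1 where d: "(SOME d. ?P d) = (a1, b1)" by (cases "SOME d. ?P d")
  have h: "\<alpha> = a1 @ b1" "red M a1 \<in> Mplus M" "red M b1 \<in> Mminus M" using Pd d by auto
  obtain c1 q1 where c1: "nf M a1 = Some c1" "set c1 \<subseteq> CS M" "nf M b1 = Some q1" "set q1 \<subseteq> OS"
    using h by (auto simp: Mplus_iff Mminus_iff)
  have "nf M \<alpha> = nf M (c1 @ b1)" using h(1) nf_Some_left[OF c1(1)] by simp
  also have "\<dots> = nf M (c1 @ q1)" using nf_Some_right[OF c1(3)] by simp
  also have "\<dots> = Some (c1 @ q1)" using c1 nf_norm by blast
  finally have "c1 @ q1 = c @ q" using assms(2) by simp
  then have e: "c1 = c" "q1 = q" using split_uniq[OF c1(2) c1(4) assms(3) assms(4)] by auto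
  have "nf M (b1 @ a1) = nf M (q1 @ a1)" using nf_Some_left[OF c1(3), of a1] .
  also have "\<dots> = nf M (q1 @ c1)" using nf_Some_right[OF c1(1), of q1] .
  finally have "nf M (b1 @ a1) = nf M (q @ c)" using e by simp
  then have "red M (b1 @ a1) = red M (q @ c)" by (simp only: red_eq_iff)
  then show ?thesis unfolding multiplier_def d Let_def by simp
qed

fun t1 :: "sym \<Rightarrow> sym list \<times> sym list \<Rightarrow> sym list \<times> sym list" where
  "t1 a (out, st) = (if a = Lam then (case st of [] \<Rightarrow> (Lam # out, [])
      | b # st' \<Rightarrow> ((case b of Eta _ \<Rightarrow> Xi | _ \<Rightarrow> Lam) # out, st'))
     else (a # out, a # st))"

definition ph1 :: "sym \<Rightarrow> sym" where "ph1 a = (if a = Xi then Lam else a)"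

lemma ph1_simps[simp]: "ph1 Lam = Lam" "ph1 Xi = Lam" "ph1 (Rho i) = Rho i" "ph1 (Eta i) = Eta i"
  by (simp_all add: ph1_def)

lemma CS_not_Lam: "a \<in> CS M \<Longrightarrow> a \<noteq> Lam \<and> a \<noteq> Xi"
  by (auto simp: CS_def)

lemma OS_cases: "a \<in> OS \<Longrightarrow> a = Lam \<or> a = Xi" by (auto simp: OS_def)

lemma stp_open_Nil: "a \<in> OS \<Longrightarrow> set q \<subseteq> OS \<Longrightarrow> stp M a (Some q) = Some (a # q)"
  by (cases q) (auto dest: OS_CS)

lemma lemA1: "set \<alpha> \<subseteq> Sigma1 M \<Longrightarrow> nf M \<alpha> = Some (c @ q) \<Longrightarrow> set c \<subseteq> CS M \<Longrightarrow> set q \<subseteq> OS \<Longrightarrow>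
   snd (foldr t1 (map ph1 \<alpha>) (out0, [])) = c"
proof (induction \<alpha> arbitrary: c q)
  case Nil then show ?case using split_uniq[of "[]" M "[]" c q] by simp
next
  case (Cons a \<alpha>)
  have nz: "nf M \<alpha> \<noteq> None" using Cons.prems(2) nf_suffix[of M "[a]" \<alpha>] by simp
  then obtain c' q' where s: "nf M \<alpha> = Some (c' @ q')" "set c' \<subseteq> CS M" "set q' \<subseteq> OS"
    using nf_shape Cons.prems(1) by (metis insert_subset list.set(2))
  have IH: "snd (foldr t1 (map ph1 \<alpha>) (out0, [])) = c'" using Cons.IH[OF _ s] Cons.prems(1) by simp
  obtain out st where os: "foldr t1 (map ph1 \<alpha>) (out0, []) = (out, st)" by (cases "foldr t1 (map ph1 \<alpha>) (out0, [])")
  with IH have st: "st = c'" by simp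
  have eq: "stp M a (Some (c' @ q')) = Some (c @ q)" using Cons.prems(2) s(1) by (simp add: nf_Cons)
  have aS: "a \<in> OS \<or> a \<in> CS M" using Cons.prems Sigma1_eq by auto
  show ?case
  proof (cases "a \<in> OS")
    case False
    then have aC: "a \<in> CS M" using aS by auto
    have "a # c' @ q' = c @ q" using eq False by simp
    then have ec: "c = a # c'" using split_uniq[of "a # c'" M q' c q] aC s Cons.prems by auto
    have "ph1 a = a" using CS_not_Lam[OF aC] by (simp add: ph1_def)
    then show ?thesis using os st aC ec CS_not_Lam[OF aC] by simp
  next
    case aO: True
    have pa: "ph1 a = Lam" using OS_cases[OF aO] by (auto simp: ph1_def CS_def)
    show ?thesis
    proof (cases c')
      case Nil
      have e0: "[] @ (a # q') = c @ q" using eq aO stp_open_Nil[OF aO s(3)] Nil by simp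
      have "[] = c \<and> a # q' = q" by (rule split_uniq[OF _ _ _ _ e0]) (use aO s Cons.prems in auto)
      then have "c = []" by auto
      then show ?thesis using os st Nil pa by simp
    next
      case (Cons d c'')
      have dC: "d \<in> CS M" using s Cons by auto
      have "c'' @ q' = c @ q" using eq aO dC Cons by (auto split: if_splits)
      then have "c = c''" using split_uniq[of c'' M q' c q] s Cons.prems Cons by auto
      then show ?thesis using os st Cons pa by simp
    qed
  qed
qed

lemma lemB1: "set \<alpha> \<subseteq> Sigma1 M \<Longrightarrow> set st0 \<subseteq> CS M \<Longrightarrow> nf M (\<alpha> @ st0) = Some (c @ q) \<Longrightarrow>
   set c \<subseteq> CS M \<Longrightarrow> set q \<subseteq> {Lam} \<Longrightarrow>
   foldr t1 (map ph1 \<alpha>) (out0, st0) = (\<alpha> @ out0, c)"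
proof (induction \<alpha> arbitrary: c q)
  case Nil
  have "nf M st0 = Some st0" using Nil nf_normC by blast
  then have "st0 @ [] = c @ q" using Nil by simp
  then have "c = st0" using split_uniq[of st0 M "[]" c q] Nil by (auto simp: OS_def)
  then show ?case by simp
next
  case (Cons a \<alpha>)
  have qO: "set q \<subseteq> OS" using Cons.prems by (auto simp: OS_def)
  have nz: "nf M (\<alpha> @ st0) \<noteq> None" using Cons.prems(3) nf_suffix[of M "[a]" "\<alpha> @ st0"] by simp
  have l: "set (\<alpha> @ st0) \<subseteq> Sigma1 M" using Cons.prems Sigma1_eq by auto
  obtain c' q' where s: "nf M (\<alpha> @ st0) = Some (c' @ q')" "set c' \<subseteq> CS M" "set q' \<subseteq> OS"
    using nf_shape[OF l nz] by blast
  have eq: "stp M a (Some (c' @ q')) = Some (c @ q)" using Cons.prems(3) s(1) by (simp add: nf_Cons)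
  have aS: "a \<in> OS \<or> a \<in> CS M" using Cons.prems Sigma1_eq by auto
  show ?case
  proof (cases "a \<in> OS")
    case False
    then have aC: "a \<in> CS M" using aS by auto
    have "a # c' @ q' = c @ q" using eq False by simp
    then have e: "c = a # c'" "q = q'" using split_uniq[of "a # c'" M q' c q] aC s Cons.prems qO by auto
    have IH: "foldr t1 (map ph1 \<alpha>) (out0, st0) = (\<alpha> @ out0, c')"
      using Cons.IH[OF _ Cons.prems(2) s(1) s(2)] Cons.prems e by auto
    have "ph1 a = a" using CS_not_Lam[OF aC] by (simp add: ph1_def)
    then show ?thesis using IH e aC CS_not_Lam[OF aC] by simp
  next
    case aO: True
    show ?thesis
    proof (cases c')
      case Nil
      have e0: "[] @ (a # q') = c @ q" using eq aO stp_open_Nil[OF aO s(3)] Nil by simp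
      have "[] = c \<and> a # q' = q" by (rule split_uniq[OF _ _ _ _ e0]) (use aO s Cons.prems qO in auto)
      then have e: "c = []" "q = a # q'" by auto
      have aL: "a = Lam" "set q' \<subseteq> {Lam}" using e Cons.prems by auto
      have IH: "foldr t1 (map ph1 \<alpha>) (out0, st0) = (\<alpha> @ out0, [])"
        using Cons.IH[of "[]" q'] Cons.prems s Nil aL by auto
      then show ?thesis using IH e aL by simp
    next
      case (Cons d c'')
      have dC: "d \<in> CS M" using s Cons by auto
      have ok: "okp a d" and "c'' @ q' = c @ q" using eq aO dC Cons by (auto split: if_splits)
      then have e: "c = c''" "q = q'" using split_uniq[of c'' M q' c q] s Cons.prems Cons qO by auto
      have IH: "foldr t1 (map ph1 \<alpha>) (out0, st0) = (\<alpha> @ out0, d # c'')"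
        using Cons.IH[of "d # c''" q'] Cons.prems s Cons e by auto
      show ?thesis using IH ok e by (auto simp: okp_def)
    qed
  qed
qed

lemma lemC1: "set w \<subseteq> insert Lam (CS M) \<Longrightarrow> set st0 \<subseteq> CS M \<Longrightarrow>
  \<exists>\<alpha> st q. foldr t1 w (out0, st0) = (\<alpha> @ out0, st) \<and> map ph1 \<alpha> = w \<and> set \<alpha> \<subseteq> Sigma1 M \<and>
     set st \<subseteq> CS M \<and> set q \<subseteq> {Lam} \<and> nf M (\<alpha> @ st0) = Some (st @ q)"
proof (induction w)
  case Nil then show ?case using nf_normC[of st0 M]
    by (rule_tac x="[]" in exI, rule_tac x=st0 in exI, rule_tac x="[]" in exI) simp
next
  case (Cons a w)
  then obtain \<alpha> st q where h: "foldr t1 w (out0, st0) = (\<alpha> @ out0, st)" "map ph1 \<alpha> = w" "set \<alpha> \<subseteq> Sigma1 M"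
     "set st \<subseteq> CS M" "set q \<subseteq> {Lam}" "nf M (\<alpha> @ st0) = Some (st @ q)" by auto
  have qO: "set q \<subseteq> OS" using h by (auto simp: OS_def)
  show ?case
  proof (cases "a = Lam")
    case False
    then have aC: "a \<in> CS M" using Cons.prems by auto
    have "nf M ((a # \<alpha>) @ st0) = Some ((a # st) @ q)" using h(6) aC OS_CS by (auto simp: nf_Cons)
    then show ?thesis using h aC False CS_not_Lam[OF aC] Sigma1_eq
      by (rule_tac x="a # \<alpha>" in exI, rule_tac x="a # st" in exI, rule_tac x=q in exI) (auto simp: ph1_def CS_def)
  next
    case aL: True
    show ?thesis
    proof (cases st)
      case Nil
      have "nf M ((Lam # \<alpha>) @ st0) = Some ([] @ (Lam # q))"
        using h(6) Nil stp_open_Nil[of Lam q M] qO by (simp add: nf_Cons OS_def)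
      then show ?thesis using h aL Nil Sigma1_eq
        by (rule_tac x="Lam # \<alpha>" in exI, rule_tac x="[]" in exI, rule_tac x="Lam # q" in exI)
           (auto simp: OS_def)
    next
      case (Cons b st')
      have bC: "b \<in> CS M" using h Cons by auto
      then obtain i where i: "i \<in> {1..M}" "b = Rho i \<or> b = Eta i" by (auto simp: CS_def)
      show ?thesis
      proof (cases "b = Rho i")
        case True
        have "nf M ((Lam # \<alpha>) @ st0) = Some (st' @ q)"
          using h(6) Cons True bC by (simp add: nf_Cons OS_def okp_def)
        then show ?thesis using h aL Cons True Sigma1_eq
          by (rule_tac x="Lam # \<alpha>" in exI, rule_tac x="st'" in exI, rule_tac x="q" in exI)
             (auto simp: OS_def)
      next
        case False
        then have bE: "b = Eta i" using i by auto
        have "nf M ((Xi # \<alpha>) @ st0) = Some (st' @ q)"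
          using h(6) Cons bE bC by (simp add: nf_Cons OS_def okp_def)
        then show ?thesis using h aL Cons bE Sigma1_eq
          by (rule_tac x="Xi # \<alpha>" in exI, rule_tac x="st'" in exI, rule_tac x="q" in exI)
             (auto simp: OS_def)
      qed
    qed
  qed
qed

definition cond1 :: "nat \<Rightarrow> sym list \<Rightarrow> bool" where
  "cond1 M \<alpha> \<longleftrightarrow> (\<exists>c q m. nf M \<alpha> = Some (c @ q) \<and> set c \<subseteq> CS M \<and> set q \<subseteq> OS \<and>
      nf M (q @ c) = Some m \<and> (set m \<subseteq> CS M \<or> set m \<subseteq> {Lam}))"

definition W :: "nat \<Rightarrow> nat \<Rightarrow> sym list set" where
  "W M n = {\<alpha>. length \<alpha> = n \<and> set \<alpha> \<subseteq> Sigma1 M \<and> nf M (\<alpha> @ \<alpha>) \<noteq> None}"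

definition psi1 :: "sym list \<Rightarrow> sym list" where
  "psi1 w = take (length w) (fst (foldr t1 w (foldr t1 w ([], []))))"

lemma three: "set c \<subseteq> CS M \<Longrightarrow> set q \<subseteq> OS \<Longrightarrow> nf M (q @ c) = Some m \<Longrightarrow> set m \<subseteq> CS M \<or> set m \<subseteq> OS \<Longrightarrow>
   nf M (c @ q @ c) = Some (c @ m) \<and> nf M (c @ q @ c @ q) = Some (c @ m @ q)"
proof -
  assume h: "set c \<subseteq> CS M" "set q \<subseteq> OS" "nf M (q @ c) = Some m" "set m \<subseteq> CS M \<or> set m \<subseteq> OS"
  have n1: "nf M (c @ m) = Some (c @ m)" "nf M (c @ m @ q) = Some (c @ m @ q)"
    using h nf_norm[of "c @ m" M "[]"] nf_norm[of "c" M "m @ q"] nf_norm[of "c @ m" M q] nf_norm[of c M m]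
    by (auto)
  have "nf M (c @ (q @ c)) = nf M (c @ m)" using nf_Some_right[OF h(3)] .
  moreover have "nf M (c @ ((q @ c) @ q)) = nf M (c @ (m @ q))"
    using nf_Some_left[OF h(3), of q] nf_cong_right by blast
  ultimately show ?thesis using n1 by simp
qed

lemma loopsG1'_eq: "loopsG1' M = insert Lam (CS M)"
  by (auto simp: loopsG1'_def CS_def)

lemma psi1_left: "\<alpha> \<in> W M n \<Longrightarrow> cond1 M \<alpha> \<Longrightarrow> psi1 (map ph1 \<alpha>) = \<alpha>"
proof -
  assume A: "\<alpha> \<in> W M n" "cond1 M \<alpha>"
  then obtain c q m where h: "nf M \<alpha> = Some (c @ q)" "set c \<subseteq> CS M" "set q \<subseteq> OS"
      "nf M (q @ c) = Some m" "set m \<subseteq> CS M \<or> set m \<subseteq> {Lam}" by (auto simp: cond1_def)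
  have L: "set \<alpha> \<subseteq> Sigma1 M" using A by (auto simp: W_def)
  have mO: "set m \<subseteq> CS M \<or> set m \<subseteq> OS" using h(5) by (auto simp: OS_def)
  have s1: "snd (foldr t1 (map ph1 \<alpha>) ([], [])) = c" using lemA1[OF L h(1-3)] .
  obtain out1 where o1: "foldr t1 (map ph1 \<alpha>) ([], []) = (out1, c)"
    using s1 by (metis prod.collapse)
  have "nf M (\<alpha> @ c) = nf M (c @ q @ c)" using nf_Some_left[OF h(1), of c] by simp
  also have "\<dots> = Some (c @ m)" using three[OF h(2-4) mO] by simp
  finally have nac: "nf M (\<alpha> @ c) = Some (c @ m)" .
  have "foldr t1 (map ph1 \<alpha>) (out1, c) = (\<alpha> @ out1, c @ m) \<or> foldr t1 (map ph1 \<alpha>) (out1, c) = (\<alpha> @ out1, c)"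
  proof (cases "set m \<subseteq> CS M")
    case True
    then show ?thesis using lemB1[OF L h(2), of "c @ m" "[]"] nac h by simp
  next
    case False
    then show ?thesis using lemB1[OF L h(2), of c m] nac h by simp
  qed
  then have "fst (foldr t1 (map ph1 \<alpha>) (out1, c)) = \<alpha> @ out1" by auto
  then show ?thesis unfolding psi1_def using o1 by simp
qed

lemma psi1_right: "w \<in> Bn (loopsG1' M) n \<Longrightarrow> psi1 w \<in> {\<alpha> \<in> W M n. cond1 M \<alpha>} \<and> map ph1 (psi1 w) = w"
proof -
  assume B: "w \<in> Bn (loopsG1' M) n"
  then have wl: "set w \<subseteq> insert Lam (CS M)" "length w = n" by (auto simp: Bn_def loopsG1'_eq)
  obtain \<alpha>2 st1 q2 where p1: "foldr t1 w ([], []) = (\<alpha>2 @ [], st1)" "map ph1 \<alpha>2 = w" "set \<alpha>2 \<subseteq> Sigma1 M"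
     "set st1 \<subseteq> CS M" "set q2 \<subseteq> {Lam}" "nf M (\<alpha>2 @ []) = Some (st1 @ q2)"
    using lemC1[OF wl(1), of "[]" "[]"] by auto
  obtain \<alpha>1 st q1 where p2: "foldr t1 w (\<alpha>2, st1) = (\<alpha>1 @ \<alpha>2, st)" "map ph1 \<alpha>1 = w" "set \<alpha>1 \<subseteq> Sigma1 M"
     "set st \<subseteq> CS M" "set q1 \<subseteq> {Lam}" "nf M (\<alpha>1 @ st1) = Some (st @ q1)"
    using lemC1[OF wl(1) p1(4), of \<alpha>2] by auto
  have len: "length \<alpha>1 = n" using p2(2) wl(2) by auto
  have ps: "psi1 w = \<alpha>1" unfolding psi1_def using p1(1) p2(1) len wl(2) by simp
  have nz: "nf M \<alpha>1 \<noteq> None" using p2(6) nf_prefix by (metis option.distinct(1))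
  obtain c q where cq: "nf M \<alpha>1 = Some (c @ q)" "set c \<subseteq> CS M" "set q \<subseteq> OS"
    using nf_shape[OF p2(3) nz] by blast
  have "snd (foldr t1 (map ph1 \<alpha>1) ([], [])) = c" using lemA1[OF p2(3) cq] .
  then have st1c: "st1 = c" using p1(1) p2(2) by simp
  have e1: "nf M (\<alpha>1 @ c) = nf M (c @ q @ c)" using nf_Some_left[OF cq(1), of c] by simp
  then have "nf M (c @ (q @ c)) \<noteq> None" using p2(6) st1c by simp
  then have "nf M (q @ c) \<noteq> None" using nf_suffix by blast
  then obtain m where m: "nf M (q @ c) = Some m" "set m \<subseteq> CS M \<or> set m \<subseteq> OS"
    using oc_shape[OF cq(3) cq(2)] by blast
  have th: "nf M (c @ q @ c) = Some (c @ m)" "nf M (c @ q @ c @ q) = Some (c @ m @ q)"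
    using three[OF cq(2) cq(3) m] by auto
  have c1: "set m \<subseteq> CS M \<or> set m \<subseteq> {Lam}"
  proof (cases "set m \<subseteq> CS M")
    case True then show ?thesis by simp
  next
    case False
    then have mO: "set m \<subseteq> OS" using m by auto
    have "c @ m = st @ q1" using th(1) e1 p2(6) st1c by simp
    then have "m = q1" using split_uniq[OF cq(2) mO p2(4)] p2(5) by (auto simp: OS_def)
    then show ?thesis using p2(5) by simp
  qed
  have "nf M (\<alpha>1 @ \<alpha>1) = nf M (c @ q @ c @ q)" using nf_Some_left[OF cq(1), of \<alpha>1] nf_Some_right[OF cq(1), of "c @ q"]
    by simp
  then have "nf M (\<alpha>1 @ \<alpha>1) \<noteq> None" using th by simp
  then have "\<alpha>1 \<in> W M n" using len p2(3) by (simp add: W_def)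
  moreover have "cond1 M \<alpha>1" using cq m c1 by (auto simp: cond1_def)
  ultimately show ?thesis using ps p2(2) by simp
qed

lemma bij1: "bij_betw (map ph1) {\<alpha> \<in> W M n. cond1 M \<alpha>} (Bn (loopsG1' M) n)"
proof (rule bij_betw_byWitness[where f'=psi1])
  show "\<forall>a\<in>{\<alpha> \<in> W M n. cond1 M \<alpha>}. psi1 (map ph1 a) = a" using psi1_left by blast
  show "\<forall>a'\<in>Bn (loopsG1' M) n. map ph1 (psi1 a') = a'" using psi1_right by blast
  show "psi1 ` Bn (loopsG1' M) n \<subseteq> {\<alpha> \<in> W M n. cond1 M \<alpha>}" using psi1_right by blast
  show "map ph1 ` {\<alpha> \<in> W M n. cond1 M \<alpha>} \<subseteq> Bn (loopsG1' M) n"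
  proof
    fix w assume "w \<in> map ph1 ` {\<alpha> \<in> W M n. cond1 M \<alpha>}"
    then obtain \<alpha> where a: "\<alpha> \<in> W M n" "w = map ph1 \<alpha>" by auto
    have "set (map ph1 \<alpha>) \<subseteq> loopsG1' M"
    proof
      fix x assume "x \<in> set (map ph1 \<alpha>)"
      then obtain y where y: "y \<in> set \<alpha>" "x = ph1 y" by auto
      then have "y \<in> Sigma1 M" using a by (auto simp: W_def)
      then show "x \<in> loopsG1' M" using y by (auto simp: Sigma1_def loopsG1'_def)
    qed
    then show "w \<in> Bn (loopsG1' M) n" using a by (auto simp: Bn_def W_def)
  qed
qed

definition RS :: "nat \<Rightarrow> sym set" where "RS M = Rho ` {1..M}"

fun t2 :: "sym list \<times> sym list \<Rightarrow> sym \<Rightarrow> sym list \<times> sym list" where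
  "t2 (out, st) a = (case a of Rho i \<Rightarrow> (case st of [] \<Rightarrow> (out @ [Rho i], [])
      | b # st' \<Rightarrow> (out @ [if b = Xi then Eta i else Rho i], st'))
     | _ \<Rightarrow> (out @ [a], a # st))"

definition ph2 :: "sym \<Rightarrow> sym" where "ph2 a = (case a of Eta i \<Rightarrow> Rho i | _ \<Rightarrow> a)"

lemma ph2_simps[simp]: "ph2 Lam = Lam" "ph2 Xi = Xi" "ph2 (Rho i) = Rho i" "ph2 (Eta i) = Rho i"
  by (simp_all add: ph2_def)

lemma RS_CS: "RS M \<subseteq> CS M" by (auto simp: RS_def CS_def)

lemma len_t2: "length (fst (foldl t2 s w)) = length (fst s) + length w"
proof (induction w arbitrary: s)
  case Nil then show ?case by simp
next
  case (Cons a w)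
  have "length (fst (t2 s a)) = length (fst s) + 1"
    by (cases s; cases a; cases "snd s") auto
  then show ?case using Cons[of "t2 s a"] by simp
qed

lemma snoc_open: "set c \<subseteq> CS M \<Longrightarrow> set q \<subseteq> OS \<Longrightarrow> a \<in> OS \<Longrightarrow> nf M (c @ q @ [a]) = Some (c @ q @ [a])"
  using nf_norm[of c M "q @ [a]"] by simp

lemma snoc_close_nil: "set c \<subseteq> CS M \<Longrightarrow> a \<in> CS M \<Longrightarrow> nf M (c @ [a]) = Some (c @ [a])"
  using nf_normC[of "c @ [a]" M] by simp

lemma snoc_close: "set c \<subseteq> CS M \<Longrightarrow> set q \<subseteq> OS \<Longrightarrow> b \<in> OS \<Longrightarrow> a \<in> CS M \<Longrightarrow>
   nf M (c @ q @ [b, a]) = (if okp b a then Some (c @ q) else None)"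
  using nf_pair[of b a M "c @ q" "[]"] nf_norm[of c M q] by simp

lemma CS_cases: "a \<in> CS M \<Longrightarrow> \<exists>i\<in>{1..M}. a = Rho i \<or> a = Eta i" by (auto simp: CS_def)

lemma lemA2: "set \<alpha> \<subseteq> Sigma1 M \<Longrightarrow> nf M \<alpha> = Some (c @ q) \<Longrightarrow> set c \<subseteq> CS M \<Longrightarrow> set q \<subseteq> OS \<Longrightarrow>
   snd (foldl t2 (out0, []) (map ph2 \<alpha>)) = rev q"
proof (induction \<alpha> arbitrary: c q rule: rev_induct)
  case Nil then show ?case using split_uniq[of "[]" M "[]" c q] by simp
next
  case (snoc a \<alpha>)
  have nz: "nf M \<alpha> \<noteq> None" using snoc.prems(2) nf_prefix[of M \<alpha> "[a]"] by simp
  have L: "set \<alpha> \<subseteq> Sigma1 M" using snoc.prems by auto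
  obtain c' q' where s: "nf M \<alpha> = Some (c' @ q')" "set c' \<subseteq> CS M" "set q' \<subseteq> OS"
    using nf_shape[OF L nz] by blast
  have IH: "snd (foldl t2 (out0, []) (map ph2 \<alpha>)) = rev q'" using snoc.IH[OF L s] .
  obtain out st where os: "foldl t2 (out0, []) (map ph2 \<alpha>) = (out, st)" by (metis prod.collapse)
  with IH have st: "st = rev q'" by simp
  have eq: "nf M (c' @ q' @ [a]) = Some (c @ q)" using snoc.prems(2) nf_Some_left[OF s(1), of "[a]"] by simp
  have aS: "a \<in> OS \<or> a \<in> CS M" using snoc.prems Sigma1_eq by auto
  show ?case
  proof (cases "a \<in> OS")
    case True
    have "c' @ (q' @ [a]) = c @ q" using eq snoc_open[OF s(2) s(3) True] by simp
    then have e: "q = q' @ [a]" using split_uniq[of c' M "q' @ [a]" c q] s snoc.prems True by auto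
    have "ph2 a = a" using OS_cases[OF True] by auto
    then show ?thesis using os st e True OS_cases[OF True] by auto
  next
    case False
    then have aC: "a \<in> CS M" using aS by auto
    then obtain i where i: "a = Rho i \<or> a = Eta i" using CS_cases by blast
    have pa: "ph2 a = Rho i" using i by auto
    show ?thesis
    proof (cases q' rule: rev_cases)
      case Nil
      have e0: "(c' @ [a]) @ [] = c @ q" using eq snoc_close_nil[OF s(2) aC] Nil by simp
      have "c' @ [a] = c \<and> [] = q" by (rule split_uniq[OF _ _ _ _ e0]) (use s snoc.prems aC in auto)
      then have "q = []" by simp
      then show ?thesis using os st Nil pa by simp
    next
      case (snoc q3 b)
      have bO: "b \<in> OS" using s snoc by auto
      have "c' @ q3 = c @ q" using eq snoc_close[of c' M q3 b a] s snoc bO aC by (auto split: if_splits)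
      then have "q = q3" using split_uniq[of c' M q3 c q] s snoc.prems snoc by auto
      then show ?thesis using os st snoc pa by simp
    qed
  qed
qed

lemma lemB2: "set \<alpha> \<subseteq> Sigma1 M \<Longrightarrow> set st0 \<subseteq> OS \<Longrightarrow> nf M (rev st0 @ \<alpha>) = Some (c @ q) \<Longrightarrow>
   set c \<subseteq> RS M \<Longrightarrow> set q \<subseteq> OS \<Longrightarrow> foldl t2 (out0, st0) (map ph2 \<alpha>) = (out0 @ \<alpha>, rev q)"
proof (induction \<alpha> arbitrary: c q rule: rev_induct)
  case Nil
  have "nf M (rev st0) = Some ([] @ rev st0)" using Nil(2) nf_normO[of "rev st0" M] by simp
  then have e0: "[] @ rev st0 = c @ q" using Nil by simp
  have cC: "set c \<subseteq> CS M" using Nil(4) RS_CS[of M] by blast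
  have "[] = c \<and> rev st0 = q" by (rule split_uniq[OF _ _ _ _ e0]) (use Nil cC in auto)
  then have "q = rev st0" by simp
  then show ?case by simp
next
  case (snoc a \<alpha>)
  have cC: "set c \<subseteq> CS M" using snoc.prems(4) RS_CS[of M] by blast
  have nz: "nf M (rev st0 @ \<alpha>) \<noteq> None" using snoc.prems(3) nf_prefix[of M "rev st0 @ \<alpha>" "[a]"] by simp
  have L: "set (rev st0 @ \<alpha>) \<subseteq> Sigma1 M" using snoc.prems Sigma1_eq by auto
  obtain c' q' where s: "nf M (rev st0 @ \<alpha>) = Some (c' @ q')" "set c' \<subseteq> CS M" "set q' \<subseteq> OS"
    using nf_shape[OF L nz] by blast
  have eq: "nf M (c' @ q' @ [a]) = Some (c @ q)" using snoc.prems(3) nf_Some_left[OF s(1), of "[a]"] by simp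
  have aS: "a \<in> OS \<or> a \<in> CS M" using snoc.prems Sigma1_eq by auto
  have L2: "set \<alpha> \<subseteq> Sigma1 M" using snoc.prems by auto
  show ?case
  proof (cases "a \<in> OS")
    case True
    have "c' @ (q' @ [a]) = c @ q" using eq snoc_open[OF s(2) s(3) True] by simp
    then have e: "c' = c" "q = q' @ [a]" using split_uniq[of c' M "q' @ [a]" c q] s snoc.prems cC True by auto
    have IH: "foldl t2 (out0, st0) (map ph2 \<alpha>) = (out0 @ \<alpha>, rev q')"
      using snoc.IH[OF L2 snoc.prems(2) s(1)] e snoc.prems s by auto
    have "ph2 a = a" using OS_cases[OF True] by auto
    then show ?thesis using IH e True OS_cases[OF True] by auto
  next
    case False
    then have aC: "a \<in> CS M" using aS by auto
    then obtain i where i: "a = Rho i \<or> a = Eta i" using CS_cases by blast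
    have pa: "ph2 a = Rho i" using i by auto
    show ?thesis
    proof (cases q' rule: rev_cases)
      case Nil
      have e0: "(c' @ [a]) @ [] = c @ q" using eq snoc_close_nil[OF s(2) aC] Nil by simp
      have "c' @ [a] = c \<and> [] = q" by (rule split_uniq[OF _ _ _ _ e0]) (use s snoc.prems cC aC in auto)
      then have e: "c = c' @ [a]" "q = []" by auto
      have aR: "a = Rho i" using e snoc.prems(4) i by (auto simp: RS_def)
      have IH: "foldl t2 (out0, st0) (map ph2 \<alpha>) = (out0 @ \<alpha>, [])"
        using snoc.IH[OF L2 snoc.prems(2), of c' "[]"] e snoc.prems s Nil by auto
      then show ?thesis using e aR by simp
    next
      case (snoc q3 b)
      have bO: "b \<in> OS" using s snoc by auto
      have ok: "okp b a" and "c' @ q3 = c @ q" using eq snoc_close[of c' M q3 b a] s snoc bO aC by (auto split: if_splits)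
      then have e: "c' = c" "q = q3" using split_uniq[of c' M q3 c q] s snoc.prems snoc cC by auto
      have IH: "foldl t2 (out0, st0) (map ph2 \<alpha>) = (out0 @ \<alpha>, b # rev q3)"
        using snoc.IH[OF L2 snoc.prems(2), of c' q'] e snoc.prems s snoc by auto
      show ?thesis using IH ok e i pa by (auto simp: okp_def)
    qed
  qed
qed

lemma lemC2: "set w \<subseteq> OS \<union> RS M \<Longrightarrow> set st0 \<subseteq> OS \<Longrightarrow>
  \<exists>\<alpha> st c. foldl t2 (out0, st0) w = (out0 @ \<alpha>, st) \<and> map ph2 \<alpha> = w \<and> set \<alpha> \<subseteq> Sigma1 M \<and>
     set st \<subseteq> OS \<and> set c \<subseteq> RS M \<and> nf M (rev st0 @ \<alpha>) = Some (c @ rev st)"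
proof (induction w rule: rev_induct)
  case Nil then show ?case using nf_normO[of "rev st0" M]
    by (rule_tac x="[]" in exI, rule_tac x=st0 in exI, rule_tac x="[]" in exI) simp
next
  case (snoc a w)
  then obtain \<alpha> st c where h: "foldl t2 (out0, st0) w = (out0 @ \<alpha>, st)" "map ph2 \<alpha> = w" "set \<alpha> \<subseteq> Sigma1 M"
     "set st \<subseteq> OS" "set c \<subseteq> RS M" "nf M (rev st0 @ \<alpha>) = Some (c @ rev st)" by auto
  have cC: "set c \<subseteq> CS M" using h(5) RS_CS[of M] by blast
  have e1: "nf M (rev st0 @ \<alpha> @ [a]) = nf M (c @ rev st @ [a])"
    using nf_Some_left[OF h(6), of "[a]"] by simp
  show ?case
  proof (cases "a \<in> OS")
    case True
    have pa: "ph2 a = a" using OS_cases[OF True] by auto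
    have f: "foldl t2 (out0, st0) (w @ [a]) = (out0 @ (\<alpha> @ [a]), a # st)"
      using h(1) OS_cases[OF True] by auto
    have "nf M (rev st0 @ (\<alpha> @ [a])) = Some (c @ rev (a # st))"
      using e1 snoc_open[OF cC _ True, of "rev st"] h(4) by simp
    then show ?thesis using f h pa True Sigma1_eq
      by (rule_tac x="\<alpha> @ [a]" in exI, rule_tac x="a # st" in exI, rule_tac x=c in exI) auto
  next
    case False
    then have "a \<in> RS M" using snoc.prems by auto
    then obtain i where i: "a = Rho i" "i \<in> {1..M}" by (auto simp: RS_def)
    have aC: "a \<in> CS M" using i by (auto simp: CS_def)
    show ?thesis
    proof (cases st)
      case Nil
      have f: "foldl t2 (out0, st0) (w @ [a]) = (out0 @ (\<alpha> @ [Rho i]), [])"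
        using h(1) i Nil by auto
      have "nf M (rev st0 @ (\<alpha> @ [Rho i])) = Some ((c @ [Rho i]) @ rev [])"
        using e1 snoc_close_nil[OF cC aC] Nil i by simp
      then show ?thesis using f h i Nil Sigma1_eq aC
        by (rule_tac x="\<alpha> @ [Rho i]" in exI, rule_tac x="[]" in exI, rule_tac x="c @ [Rho i]" in exI)
           (auto simp: RS_def)
    next
      case (Cons b st')
      have bO: "b \<in> OS" using h Cons by auto
      have st'O: "set (rev st') \<subseteq> OS" using h Cons by auto
      show ?thesis
      proof (cases "b = Xi")
        case True
        have eC: "Eta i \<in> CS M" using i by (auto simp: CS_def)
        have f: "foldl t2 (out0, st0) (w @ [a]) = (out0 @ (\<alpha> @ [Eta i]), st')"
          using h(1) i Cons True by auto
        have "nf M (rev st0 @ (\<alpha> @ [Eta i])) = nf M (c @ rev st' @ [Xi, Eta i])"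
          using nf_Some_left[OF h(6), of "[Eta i]"] Cons True by simp
        also have "\<dots> = Some (c @ rev st')" using snoc_close[OF cC st'O _ eC, of Xi] by (simp add: OS_def okp_def)
        finally show ?thesis using f h i Cons Sigma1_eq eC
          by (rule_tac x="\<alpha> @ [Eta i]" in exI, rule_tac x="st'" in exI, rule_tac x="c" in exI) auto
      next
        case False
        then have bL: "b = Lam" using bO by (auto simp: OS_def)
        have f: "foldl t2 (out0, st0) (w @ [a]) = (out0 @ (\<alpha> @ [Rho i]), st')"
          using h(1) i Cons bL by auto
        have "nf M (rev st0 @ (\<alpha> @ [Rho i])) = nf M (c @ rev st' @ [Lam, Rho i])"
          using nf_Some_left[OF h(6), of "[Rho i]"] Cons bL by simp
        also have "\<dots> = Some (c @ rev st')" using snoc_close[OF cC st'O _ aC, of Lam] i by (simp add: OS_def okp_def)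
        finally show ?thesis using f h i Cons Sigma1_eq aC
          by (rule_tac x="\<alpha> @ [Rho i]" in exI, rule_tac x="st'" in exI, rule_tac x="c" in exI) auto
      qed
    qed
  qed
qed

definition cond2 :: "nat \<Rightarrow> sym list \<Rightarrow> bool" where
  "cond2 M \<alpha> \<longleftrightarrow> (\<exists>c q m. nf M \<alpha> = Some (c @ q) \<and> set c \<subseteq> CS M \<and> set q \<subseteq> OS \<and>
      nf M (q @ c) = Some m \<and> (set m \<subseteq> OS \<or> set m \<subseteq> RS M))"

definition psi2 :: "sym list \<Rightarrow> sym list" where
  "psi2 w = drop (length w) (fst (foldl t2 (foldl t2 ([], []) w) w))"

lemma three2: "set c \<subseteq> CS M \<Longrightarrow> set q \<subseteq> OS \<Longrightarrow> nf M (q @ c) = Some m \<Longrightarrow> set m \<subseteq> CS M \<or> set m \<subseteq> OS \<Longrightarrow>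
   nf M (q @ c @ q) = Some (m @ q)"
proof -
  assume h: "set c \<subseteq> CS M" "set q \<subseteq> OS" "nf M (q @ c) = Some m" "set m \<subseteq> CS M \<or> set m \<subseteq> OS"
  have n1: "nf M (m @ q) = Some (m @ q)"
    using h nf_norm[of m M q] nf_norm[of "[]" M "m @ q"] by auto
  have "nf M ((q @ c) @ q) = nf M (m @ q)" using nf_Some_left[OF h(3)] .
  then show ?thesis using n1 by simp
qed

lemma loopsG1''_eq: "loopsG1'' M = OS \<union> RS M"
  by (auto simp: loopsG1''_def OS_def RS_def)

lemma psi2_left: "\<alpha> \<in> W M n \<Longrightarrow> cond2 M \<alpha> \<Longrightarrow> psi2 (map ph2 \<alpha>) = \<alpha>"
proof -
  assume A: "\<alpha> \<in> W M n" "cond2 M \<alpha>"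
  then obtain c q m where h: "nf M \<alpha> = Some (c @ q)" "set c \<subseteq> CS M" "set q \<subseteq> OS"
      "nf M (q @ c) = Some m" "set m \<subseteq> OS \<or> set m \<subseteq> RS M" by (auto simp: cond2_def)
  have L: "set \<alpha> \<subseteq> Sigma1 M" "length \<alpha> = n" using A by (auto simp: W_def)
  have mO: "set m \<subseteq> CS M \<or> set m \<subseteq> OS" using h(5) RS_CS[of M] by blast
  have s1: "snd (foldl t2 ([], []) (map ph2 \<alpha>)) = rev q" using lemA2[OF L(1) h(1-3)] .
  obtain out1 where o1: "foldl t2 ([], []) (map ph2 \<alpha>) = (out1, rev q)"
    using s1 by (metis prod.collapse)
  have lo: "length out1 = length \<alpha>" using len_t2[of "([], [])" "map ph2 \<alpha>"] o1 by simp
  have "nf M (rev (rev q) @ \<alpha>) = nf M (q @ c @ q)" using nf_Some_right[OF h(1), of q] by simp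
  also have "\<dots> = Some (m @ q)" using three2[OF h(2-4) mO] .
  finally have nac: "nf M (rev (rev q) @ \<alpha>) = Some (m @ q)" .
  have sq: "set (rev q) \<subseteq> OS" using h by simp
  have "\<exists>z. foldl t2 (out1, rev q) (map ph2 \<alpha>) = (out1 @ \<alpha>, z)"
  proof (cases "set m \<subseteq> RS M")
    case True
    then show ?thesis using lemB2[OF L(1) sq nac True h(3)] by blast
  next
    case False
    then have "set m \<subseteq> OS" using h(5) by auto
    then show ?thesis using lemB2[OF L(1) sq, of "[]" "m @ q"] nac h by auto
  qed
  then have "fst (foldl t2 (out1, rev q) (map ph2 \<alpha>)) = out1 @ \<alpha>" by auto
  then show ?thesis unfolding psi2_def using o1 lo by simp
qed

lemma psi2_right: "w \<in> Bn (loopsG1'' M) n \<Longrightarrow> psi2 w \<in> {\<alpha> \<in> W M n. cond2 M \<alpha>} \<and> map ph2 (psi2 w) = w"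
proof -
  assume B: "w \<in> Bn (loopsG1'' M) n"
  then have wl: "set w \<subseteq> OS \<union> RS M" "length w = n" by (auto simp: Bn_def loopsG1''_eq)
  obtain \<alpha>2 st1 c2 where p1: "foldl t2 ([], []) w = ([] @ \<alpha>2, st1)" "map ph2 \<alpha>2 = w" "set \<alpha>2 \<subseteq> Sigma1 M"
     "set st1 \<subseteq> OS" "set c2 \<subseteq> RS M" "nf M (rev [] @ \<alpha>2) = Some (c2 @ rev st1)"
    using lemC2[OF wl(1), of "[]" "[]"] by auto
  obtain \<alpha>1 st c' where p2: "foldl t2 (\<alpha>2, st1) w = (\<alpha>2 @ \<alpha>1, st)" "map ph2 \<alpha>1 = w" "set \<alpha>1 \<subseteq> Sigma1 M"
     "set st \<subseteq> OS" "set c' \<subseteq> RS M" "nf M (rev st1 @ \<alpha>1) = Some (c' @ rev st)"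
    using lemC2[OF wl(1) p1(4), of \<alpha>2] by auto
  have len: "length \<alpha>1 = n" "length \<alpha>2 = n" using p2(2) p1(2) wl(2) by (metis length_map)+
  have ps: "psi2 w = \<alpha>1" unfolding psi2_def using p1(1) p2(1) len wl(2) by simp
  have nz: "nf M \<alpha>1 \<noteq> None" using p2(6) nf_suffix by (metis option.distinct(1))
  obtain c q where cq: "nf M \<alpha>1 = Some (c @ q)" "set c \<subseteq> CS M" "set q \<subseteq> OS"
    using nf_shape[OF p2(3) nz] by blast
  have "snd (foldl t2 ([], []) (map ph2 \<alpha>1)) = rev q" using lemA2[OF p2(3) cq] .
  then have st1q: "rev st1 = q" using p1(1) p2(2) by simp
  have e1: "nf M (rev st1 @ \<alpha>1) = nf M ((q @ c) @ q)" using nf_Some_right[OF cq(1), of q] st1q by simp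
  then have "nf M ((q @ c) @ q) \<noteq> None" using p2(6) by (metis append_assoc option.distinct(1))
  then have "nf M (q @ c) \<noteq> None" using nf_prefix by blast
  then obtain m where m: "nf M (q @ c) = Some m" "set m \<subseteq> CS M \<or> set m \<subseteq> OS"
    using oc_shape[OF cq(3) cq(2)] by blast
  have th: "nf M (q @ c @ q) = Some (m @ q)" using three2[OF cq(2) cq(3) m] .
  have th2: "nf M (c @ q @ c @ q) = Some (c @ m @ q)" using three[OF cq(2) cq(3) m] by auto
  have c2: "set m \<subseteq> OS \<or> set m \<subseteq> RS M"
  proof (cases "set m \<subseteq> OS")
    case True then show ?thesis by simp
  next
    case False
    then have mC: "set m \<subseteq> CS M" using m by auto
    have e0: "m @ q = c' @ rev st" using th e1 p2(6) by simp
    have "m = c' \<and> q = rev st" by (rule split_uniq[OF _ _ _ _ e0]) (use mC cq p2 RS_CS[of M] in auto)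
    then show ?thesis using p2(5) by simp
  qed
  have "nf M (\<alpha>1 @ \<alpha>1) = nf M (c @ q @ c @ q)" using nf_Some_left[OF cq(1), of \<alpha>1] nf_Some_right[OF cq(1), of "c @ q"]
    by simp
  then have "nf M (\<alpha>1 @ \<alpha>1) \<noteq> None" using th2 by simp
  then have "\<alpha>1 \<in> W M n" using len p2(3) by (simp add: W_def)
  moreover have "cond2 M \<alpha>1" using cq m c2 by (auto simp: cond2_def)
  ultimately show ?thesis using ps p2(2) by simp
qed

lemma bij2: "bij_betw (map ph2) {\<alpha> \<in> W M n. cond2 M \<alpha>} (Bn (loopsG1'' M) n)"
proof (rule bij_betw_byWitness[where f'=psi2])
  show "\<forall>a\<in>{\<alpha> \<in> W M n. cond2 M \<alpha>}. psi2 (map ph2 a) = a" using psi2_left by blast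
  show "\<forall>a'\<in>Bn (loopsG1'' M) n. map ph2 (psi2 a') = a'" using psi2_right by blast
  show "psi2 ` Bn (loopsG1'' M) n \<subseteq> {\<alpha> \<in> W M n. cond2 M \<alpha>}" using psi2_right by blast
  show "map ph2 ` {\<alpha> \<in> W M n. cond2 M \<alpha>} \<subseteq> Bn (loopsG1'' M) n"
  proof
    fix w assume "w \<in> map ph2 ` {\<alpha> \<in> W M n. cond2 M \<alpha>}"
    then obtain \<alpha> where a: "\<alpha> \<in> W M n" "w = map ph2 \<alpha>" by auto
    have "set (map ph2 \<alpha>) \<subseteq> loopsG1'' M"
    proof
      fix x assume "x \<in> set (map ph2 \<alpha>)"
      then obtain y where y: "y \<in> set \<alpha>" "x = ph2 y" by auto
      then have "y \<in> Sigma1 M" using a by (auto simp: W_def)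
      then show "x \<in> loopsG1'' M" using y by (auto simp: Sigma1_def loopsG1''_def)
    qed
    then show "w \<in> Bn (loopsG1'' M) n" using a by (auto simp: Bn_def W_def)
  qed
qed

lemma shift_pow: "(shift ^^ k) x = (\<lambda>i. x (i + int k))"
  by (induction k arbitrary: x) (auto simp: shift_def add.assoc)

lemma Pn_periodic: "x \<in> Pn M n \<Longrightarrow> x (i + int n) = x i"
proof -
  assume "x \<in> Pn M n"
  then have "(\<lambda>i. x (i + int n)) = x" by (simp add: Pn_def shift_pow)
  then show ?thesis by metis
qed

lemma per_mod:
  assumes n: "n > 0" and p: "\<And>i. x (i + int n) = x i"
  shows "x i = x (i mod int n)"
proof -
  have A: "x (j + int k * int n) = x j" for j k
  proof (induction k)
    case 0 then show ?case by simp
  next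
    case (Suc k)
    have "x (j + int (Suc k) * int n) = x ((j + int k * int n) + int n)" by (simp add: algebra_simps)
    then show ?case using p Suc by simp
  qed
  have d: "i = i mod int n + (i div int n) * int n" by simp
  show ?thesis
  proof (cases "i div int n \<ge> 0")
    case True
    then have "x (i mod int n + int (nat (i div int n)) * int n) = x (i mod int n)" using A by blast
    then show ?thesis using True d by (metis int_nat_eq)
  next
    case False
    have "x (i + int (nat (- (i div int n))) * int n) = x i" using A by blast
    moreover have "i + int (nat (- (i div int n))) * int n = i mod int n"
      using False d by (simp add: algebra_simps)
    ultimately show ?thesis by simp
  qed
qed

lemma defblock_len[simp]: "length (defblock n x) = n" by (simp add: defblock_def)
lemma defblock_nth: "k < n \<Longrightarrow> defblock n x ! k = x (int k)" by (simp add: defblock_def)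

lemma Pn_defblock: "n > 0 \<Longrightarrow> x \<in> Pn M n \<Longrightarrow> x i = defblock n x ! nat (i mod int n)"
proof -
  assume n: "n > 0" and x: "x \<in> Pn M n"
  have "x i = x (i mod int n)" using per_mod[OF n] Pn_periodic[OF x] by blast
  moreover have "nat (i mod int n) < n" using n by (simp add: nat_less_iff)
  ultimately show ?thesis using defblock_nth n by simp
qed

lemma concat_rep_nth: "m < K * length \<alpha> \<Longrightarrow> concat (replicate K \<alpha>) ! m = \<alpha> ! (m mod length \<alpha>)"
proof (induction K arbitrary: m)
  case 0 then show ?case by simp
next
  case (Suc K)
  show ?case
  proof (cases "m < length \<alpha>")
    case True then show ?thesis by (simp add: nth_append)
  next
    case False
    then have "m - length \<alpha> < K * length \<alpha>" using Suc.prems by auto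
    then show ?thesis using Suc.IH False by (simp add: nth_append mod_if le_mod_geq)
  qed
qed

lemma take_drop_nth: "r + k < length l \<Longrightarrow> k < L \<Longrightarrow> l ! (r + k) = take L (drop r l) ! k"
  by simp

lemma len_concat_rep: "length (concat (replicate K \<alpha>)) = K * length \<alpha>"
  by (induction K) auto

lemma block_eq:
  assumes n: "n > 0" and la: "length \<alpha> = n" and xa: "\<And>i. x i = \<alpha> ! nat (i mod int n)" and ij: "i \<le> j"
  shows "block x i j = take (nat (j - i + 1)) (drop (nat (i mod int n)) (concat (replicate (nat (j - i + 1) div n + 2) \<alpha>)))"
proof -
  let ?L = "nat (j - i + 1)" and ?r = "nat (i mod int n)" and ?K = "nat (j - i + 1) div n + 2"
  have rn: "?r < n" using n by (simp add: nat_less_iff)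
  have "?L < (?L div n + 1) * n" using n by (metis add.commute div_mult_mod_eq mod_less_divisor mult_Suc nat_add_left_cancel_less plus_1_eq_Suc)
  then have KL: "?r + ?L < ?K * n" using rn by (simp add: algebra_simps)
  show ?thesis
  proof (rule nth_equalityI)
    show "length (block x i j) = length (take ?L (drop ?r (concat (replicate ?K \<alpha>))))"
      using KL la by (simp only: block_def length_map length_upto length_take length_drop len_concat_rep) simp
  next
    fix k assume k: "k < length (block x i j)"
    then have kL: "k < ?L" by (simp add: block_def)
    have "block x i j ! k = x (i + int k)" using kL by (simp add: block_def)
    also have "\<dots> = \<alpha> ! nat ((i + int k) mod int n)" using xa by simp
    also have "nat ((i + int k) mod int n) = (?r + k) mod n"
    proof -
      have "(i + int k) mod int n = (i mod int n + int k) mod int n" by (simp add: mod_add_left_eq)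
      also have "\<dots> = int ((?r + k) mod n)" using n by (simp add: of_nat_mod)
      finally show ?thesis by simp
    qed
    also have "\<alpha> ! ((?r + k) mod n) = concat (replicate ?K \<alpha>) ! (?r + k)"
      using concat_rep_nth[of "?r + k" ?K \<alpha>] KL kL la by simp
    also have "concat (replicate ?K \<alpha>) ! (?r + k) = take ?L (drop ?r (concat (replicate ?K \<alpha>))) ! k"
    proof -
      have "?r + k < length (concat (replicate ?K \<alpha>))" using KL kL la by (simp only: len_concat_rep)
      then show ?thesis using kL take_drop_nth by metis
    qed
    finally show "block x i j ! k = take ?L (drop ?r (concat (replicate ?K \<alpha>))) ! k" .
  qed
qed

lemma nf_infix: "nf M l \<noteq> None \<Longrightarrow> nf M (take L (drop r l)) \<noteq> None"
proof -
  assume h: "nf M l \<noteq> None"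
  have "l = take r l @ (take L (drop r l) @ drop L (drop r l))" by (metis append_take_drop_id)
  then have "nf M (take r l @ (take L (drop r l) @ drop L (drop r l))) \<noteq> None" using h by metis
  then show ?thesis using nf_suffix nf_prefix by blast
qed

lemma pow_nonzero:
  assumes L: "set \<alpha> \<subseteq> Sigma1 M" and z: "nf M (\<alpha> @ \<alpha>) \<noteq> None"
  shows "nf M (concat (replicate K \<alpha>)) \<noteq> None"
proof -
  have nz: "nf M \<alpha> \<noteq> None" using z nf_prefix by blast
  obtain c q where cq: "nf M \<alpha> = Some (c @ q)" "set c \<subseteq> CS M" "set q \<subseteq> OS" using nf_shape[OF L nz] by blast
  have e: "nf M (\<alpha> @ \<alpha>) = nf M (c @ q @ c @ q)"
    using nf_Some_left[OF cq(1), of \<alpha>] nf_Some_right[OF cq(1), of "c @ q"] by simp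
  then have "nf M (c @ ((q @ c) @ q)) \<noteq> None" using z by simp
  then have "nf M (q @ c) \<noteq> None" using nf_suffix nf_prefix by blast
  then obtain m where m: "nf M (q @ c) = Some m" "set m \<subseteq> CS M \<or> set m \<subseteq> OS"
    using oc_shape[OF cq(3) cq(2)] by blast
  have "nf M (concat (replicate (Suc k) \<alpha>)) = Some (c @ concat (replicate k m) @ q)" for k
  proof (induction k)
    case 0 then show ?case using cq by simp
  next
    case (Suc k)
    have "nf M (concat (replicate (Suc (Suc k)) \<alpha>)) = nf M (\<alpha> @ concat (replicate (Suc k) \<alpha>))" by simp
    also have "\<dots> = nf M ((c @ q) @ (c @ concat (replicate k m) @ q))"
      using nf_Some_left[OF cq(1)] nf_Some_right[OF Suc] by metis
    also have "\<dots> = nf M (c @ ((q @ c) @ (concat (replicate k m) @ q)))" by simp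
    also have "\<dots> = nf M (c @ (m @ (concat (replicate k m) @ q)))"
      using nf_Some_left[OF m(1)] nf_cong_right by blast
    also have "\<dots> = Some (c @ concat (replicate (Suc k) m) @ q)"
    proof -
      have s: "set (concat (replicate (Suc k) m)) \<subseteq> set m" by auto
      show ?thesis
      proof (cases "set m \<subseteq> CS M")
        case True
        then show ?thesis using nf_norm[of "c @ concat (replicate (Suc k) m)" M q] cq s by auto
      next
        case False
        then have "set m \<subseteq> OS" using m by auto
        then show ?thesis using nf_norm[of c M "concat (replicate (Suc k) m) @ q"] cq s by auto
      qed
    qed
    finally show ?case .
  qed
  then show ?thesis by (cases K) auto
qed

lemma Pn_W: "n > 0 \<Longrightarrow> bij_betw (defblock n) (Pn M n) (W M n)"
proof (rule bij_betw_byWitness[where f'="\<lambda>\<alpha> i. \<alpha> ! nat (i mod int n)"])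
  assume n: "n > 0"
  show "\<forall>x\<in>Pn M n. (\<lambda>i. defblock n x ! nat (i mod int n)) = x"
    using Pn_defblock[OF n] by auto
  show "\<forall>\<alpha>\<in>W M n. defblock n (\<lambda>i. \<alpha> ! nat (i mod int n)) = \<alpha>"
  proof
    fix \<alpha> assume "\<alpha> \<in> W M n"
    then have la: "length \<alpha> = n" by (simp add: W_def)
    show "defblock n (\<lambda>i. \<alpha> ! nat (i mod int n)) = \<alpha>"
      by (rule nth_equalityI) (auto simp: la defblock_def nat_mod_as_int[symmetric])
  qed
  show "defblock n ` Pn M n \<subseteq> W M n"
  proof
    fix \<alpha> assume "\<alpha> \<in> defblock n ` Pn M n"
    then obtain x where x: "x \<in> Pn M n" "\<alpha> = defblock n x" by auto
    have xX: "x \<in> XM M" using x by (simp add: Pn_def)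
    have L: "set \<alpha> \<subseteq> Sigma1 M" using xX x by (auto simp: XM_def defblock_def)
    have xa: "x i = \<alpha> ! nat (i mod int n)" for i using Pn_defblock[OF n x(1)] x by simp
    have "block x 0 (2 * int n - 1) = take (nat (2 * int n - 1 - 0 + 1)) (drop (nat (0 mod int n))
        (concat (replicate (nat (2 * int n - 1 - 0 + 1) div n + 2) \<alpha>)))"
      using block_eq[OF n _ xa] x n by simp
    also have "\<dots> = \<alpha> @ \<alpha>"
    proof -
      have e: "nat (2 * int n - 1 - 0 + 1) = 2 * n" by simp
      have "concat (replicate (2 * n div n + 2) \<alpha>) = concat (replicate 4 \<alpha>)" using n by simp
      then show ?thesis using e x by (simp add: numeral_eq_Suc)
    qed
    finally have "block x 0 (2 * int n - 1) = \<alpha> @ \<alpha>" .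
    moreover have "red M (block x 0 (2 * int n - 1)) \<noteq> mzero M" using xX n by (simp add: XM_def)
    ultimately have "nf M (\<alpha> @ \<alpha>) \<noteq> None" by (simp add: red_zero_iff)
    then show "\<alpha> \<in> W M n" using L x by (simp add: W_def)
  qed
  show "(\<lambda>\<alpha> i. \<alpha> ! nat (i mod int n)) ` W M n \<subseteq> Pn M n"
  proof
    fix x assume "x \<in> (\<lambda>\<alpha> i. \<alpha> ! nat (i mod int n)) ` W M n"
    then obtain \<alpha> where a: "\<alpha> \<in> W M n" "x = (\<lambda>i. \<alpha> ! nat (i mod int n))" by auto
    have la: "length \<alpha> = n" and L: "set \<alpha> \<subseteq> Sigma1 M" and z: "nf M (\<alpha> @ \<alpha>) \<noteq> None"
      using a by (auto simp: W_def)
    have letters: "x i \<in> Sigma1 M" for i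
    proof -
      have "nat (i mod int n) < n" using n by (simp add: nat_less_iff)
      then show ?thesis using a la L by (auto simp: nth_mem subsetD)
    qed
    have blocks: "red M (block x i j) \<noteq> mzero M" if "i \<le> j" for i j
    proof -
      have "block x i j = take (nat (j - i + 1)) (drop (nat (i mod int n)) (concat (replicate (nat (j - i + 1) div n + 2) \<alpha>)))"
        using block_eq[OF n la _ that] a by simp
      then have "nf M (block x i j) \<noteq> None" using nf_infix pow_nonzero[OF L z] by metis
      then show ?thesis by (simp add: red_zero_iff)
    qed
    have "(shift ^^ n) x = x" using a by (simp add: shift_pow)
    then show "x \<in> Pn M n" using letters blocks by (simp add: Pn_def XM_def)
  qed
qed

lemma W_data:
  assumes "\<alpha> \<in> W M n"
  shows "\<exists>c q m. nf M \<alpha> = Some (c @ q) \<and> set c \<subseteq> CS M \<and> set q \<subseteq> OS \<and> nf M (q @ c) = Some m \<and>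
     (set m \<subseteq> CS M \<or> set m \<subseteq> OS) \<and> multiplier M \<alpha> = red M (q @ c)"
proof -
  have L: "set \<alpha> \<subseteq> Sigma1 M" and z: "nf M (\<alpha> @ \<alpha>) \<noteq> None" using assms by (auto simp: W_def)
  have nz: "nf M \<alpha> \<noteq> None" using z nf_prefix by blast
  obtain c q where cq: "nf M \<alpha> = Some (c @ q)" "set c \<subseteq> CS M" "set q \<subseteq> OS" using nf_shape[OF L nz] by blast
  have e: "nf M (\<alpha> @ \<alpha>) = nf M (c @ q @ c @ q)"
    using nf_Some_left[OF cq(1), of \<alpha>] nf_Some_right[OF cq(1), of "c @ q"] by simp
  then have "nf M (c @ ((q @ c) @ q)) \<noteq> None" using z by simp
  then have "nf M (q @ c) \<noteq> None" using nf_suffix nf_prefix by blast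
  then obtain m where m: "nf M (q @ c) = Some m" "set m \<subseteq> CS M \<or> set m \<subseteq> OS"
    using oc_shape[OF cq(3) cq(2)] by blast
  show ?thesis using cq m multiplier_eq[OF L cq] by blast
qed

lemma uniq_data: "nf M \<alpha> = Some (c @ q) \<Longrightarrow> set c \<subseteq> CS M \<Longrightarrow> set q \<subseteq> OS \<Longrightarrow>
   nf M \<alpha> = Some (c' @ q') \<Longrightarrow> set c' \<subseteq> CS M \<Longrightarrow> set q' \<subseteq> OS \<Longrightarrow> c' = c \<and> q' = q"
  using split_uniq[of c' M q' c q] by auto

lemma rep_Lam: "set m \<subseteq> {Lam} \<Longrightarrow> m = replicate (length m) Lam"
  by (induction m) auto

lemma cond1_iff: "\<alpha> \<in> W M n \<Longrightarrow>
  (mult_positive M \<alpha> \<or> mult_neutral M \<alpha> \<or> (\<exists>k\<ge>1. multiplier M \<alpha> = red M (replicate k Lam))) \<longleftrightarrow> cond1 M \<alpha>"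
proof -
  assume A: "\<alpha> \<in> W M n"
  then obtain c q m where h: "nf M \<alpha> = Some (c @ q)" "set c \<subseteq> CS M" "set q \<subseteq> OS" "nf M (q @ c) = Some m"
     "set m \<subseteq> CS M \<or> set m \<subseteq> OS" "multiplier M \<alpha> = red M (q @ c)" using W_data by blast
  have c1: "cond1 M \<alpha> \<longleftrightarrow> (set m \<subseteq> CS M \<or> set m \<subseteq> {Lam})"
  proof
    assume "cond1 M \<alpha>"
    then obtain c' q' m' where h': "nf M \<alpha> = Some (c' @ q')" "set c' \<subseteq> CS M" "set q' \<subseteq> OS"
      "nf M (q' @ c') = Some m'" "set m' \<subseteq> CS M \<or> set m' \<subseteq> {Lam}" by (auto simp: cond1_def)
    then have "c' = c \<and> q' = q" using uniq_data[OF h(1-3)] by blast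
    then show "set m \<subseteq> CS M \<or> set m \<subseteq> {Lam}" using h h' by auto
  next
    assume "set m \<subseteq> CS M \<or> set m \<subseteq> {Lam}"
    then show "cond1 M \<alpha>" using h by (auto simp: cond1_def)
  qed
  have lamk: "nf M (replicate k Lam) = Some (replicate k Lam)" for k
    by (rule nf_normO) (auto simp: OS_def)
  have pos: "mult_positive M \<alpha> \<longleftrightarrow> set m \<subseteq> CS M \<and> m \<noteq> []"
    unfolding mult_positive_def h(6) using h(4) by (auto simp: Mplus_iff red_mone_iff)
  have neu: "mult_neutral M \<alpha> \<longleftrightarrow> m = []"
    unfolding mult_neutral_def h(6) using h(4) by (auto simp: red_mone_iff)
  have lam: "(\<exists>k\<ge>1. multiplier M \<alpha> = red M (replicate k Lam)) \<longleftrightarrow> (\<exists>k\<ge>1. m = replicate k Lam)"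
    unfolding h(6) using h(4) lamk by (auto simp: red_eq_iff)
  have "(set m \<subseteq> CS M \<and> m \<noteq> []) \<or> m = [] \<or> (\<exists>k\<ge>1. m = replicate k Lam) \<longleftrightarrow> (set m \<subseteq> CS M \<or> set m \<subseteq> {Lam})"
  proof
    assume "(set m \<subseteq> CS M \<and> m \<noteq> []) \<or> m = [] \<or> (\<exists>k\<ge>1. m = replicate k Lam)"
    then show "set m \<subseteq> CS M \<or> set m \<subseteq> {Lam}" by auto
  next
    assume a: "set m \<subseteq> CS M \<or> set m \<subseteq> {Lam}"
    show "(set m \<subseteq> CS M \<and> m \<noteq> []) \<or> m = [] \<or> (\<exists>k\<ge>1. m = replicate k Lam)"
    proof (cases "m = []")
      case False
      have "set m \<subseteq> {Lam} \<Longrightarrow> \<exists>k\<ge>1. m = replicate k Lam"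
      proof -
        assume s: "set m \<subseteq> {Lam}"
        have "m = replicate (length m) Lam" using rep_Lam[OF s] .
        moreover have "length m \<ge> 1" using False by (cases m) auto
        ultimately show ?thesis by blast
      qed
      then show ?thesis using a False by blast
    qed simp
  qed
  then show ?thesis using pos neu lam c1 by blast
qed

lemma cond2_iff: "\<alpha> \<in> W M n \<Longrightarrow>
  (mult_negative M \<alpha> \<or> mult_neutral M \<alpha> \<or> multiplier M \<alpha> \<in> Mrho M - {mone M}) \<longleftrightarrow> cond2 M \<alpha>"
proof -
  assume A: "\<alpha> \<in> W M n"
  then obtain c q m where h: "nf M \<alpha> = Some (c @ q)" "set c \<subseteq> CS M" "set q \<subseteq> OS" "nf M (q @ c) = Some m"
     "set m \<subseteq> CS M \<or> set m \<subseteq> OS" "multiplier M \<alpha> = red M (q @ c)" using W_data by blast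
  have c2: "cond2 M \<alpha> \<longleftrightarrow> (set m \<subseteq> OS \<or> set m \<subseteq> RS M)"
  proof
    assume "cond2 M \<alpha>"
    then obtain c' q' m' where h': "nf M \<alpha> = Some (c' @ q')" "set c' \<subseteq> CS M" "set q' \<subseteq> OS"
      "nf M (q' @ c') = Some m'" "set m' \<subseteq> OS \<or> set m' \<subseteq> RS M" by (auto simp: cond2_def)
    then have "c' = c \<and> q' = q" using uniq_data[OF h(1-3)] by blast
    then show "set m \<subseteq> OS \<or> set m \<subseteq> RS M" using h h' by auto
  next
    assume "set m \<subseteq> OS \<or> set m \<subseteq> RS M"
    then show "cond2 M \<alpha>" using h by (auto simp: cond2_def)
  qed
  have neg: "mult_negative M \<alpha> \<longleftrightarrow> set m \<subseteq> OS \<and> m \<noteq> []"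
    unfolding mult_negative_def h(6) using h(4) by (auto simp: Mminus_iff red_mone_iff)
  have neu: "mult_neutral M \<alpha> \<longleftrightarrow> m = []"
    unfolding mult_neutral_def h(6) using h(4) by (auto simp: red_mone_iff)
  have rho: "multiplier M \<alpha> \<in> Mrho M - {mone M} \<longleftrightarrow> set m \<subseteq> RS M \<and> m \<noteq> []"
    unfolding h(6) using h(4) by (auto simp: Mrho_iff red_mone_iff RS_def)
  show ?thesis using neg neu rho c2 by auto
qed

lemma restrict_bij:
  assumes b: "bij_betw f A B"
  shows "bij_betw f {x \<in> A. P (f x)} {y \<in> B. P y}"
proof (rule bij_betw_subset[OF b])
  show "{x \<in> A. P (f x)} \<subseteq> A" by auto
  show "f ` {x \<in> A. P (f x)} = {y \<in> B. P y}"
  proof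
    show "f ` {x \<in> A. P (f x)} \<subseteq> {y \<in> B. P y}" using b by (auto simp: bij_betw_def)
    show "{y \<in> B. P y} \<subseteq> f ` {x \<in> A. P (f x)}"
    proof
      fix y assume y: "y \<in> {y \<in> B. P y}"
      then obtain x where "x \<in> A" "f x = y" using b by (auto simp: bij_betw_def)
      then show "y \<in> f ` {x \<in> A. P (f x)}" using y by auto
    qed
  qed
qed

theorem lemma3p1:
  fixes M n :: nat
  assumes "n \<ge> 1"
  shows "(\<exists>f. bij_betw f
            {x \<in> Pn M n. mult_positive M (defblock n x) \<or> mult_neutral M (defblock n x) \<or>
                (\<exists>k\<ge>1. multiplier M (defblock n x) = red M (replicate k Lam))}
            (Bn (loopsG1' M) n))
       \<and> (\<exists>g. bij_betw g
            {x \<in> Pn M n. mult_negative M (defblock n x) \<or> mult_neutral M (defblock n x) \<or>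
                multiplier M (defblock n x) \<in> Mrho M - {mone M}}
            (Bn (loopsG1'' M) n))"
proof
  have n: "n > 0" using assms by simp
  have b0: "bij_betw (defblock n) (Pn M n) (W M n)" using Pn_W[OF n] .
  have s1: "{y \<in> W M n. mult_positive M y \<or> mult_neutral M y \<or> (\<exists>k\<ge>1. multiplier M y = red M (replicate k Lam))}
      = {\<alpha> \<in> W M n. cond1 M \<alpha>}" using cond1_iff by blast
  have "bij_betw (defblock n) {x \<in> Pn M n. mult_positive M (defblock n x) \<or> mult_neutral M (defblock n x) \<or>
                (\<exists>k\<ge>1. multiplier M (defblock n x) = red M (replicate k Lam))} {\<alpha> \<in> W M n. cond1 M \<alpha>}"
    using restrict_bij[OF b0, of "\<lambda>y. mult_positive M y \<or> mult_neutral M y \<or> (\<exists>k\<ge>1. multiplier M y = red M (replicate k Lam))"]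
    s1 by simp
  from bij_betw_trans[OF this bij1]
  show "\<exists>f. bij_betw f
            {x \<in> Pn M n. mult_positive M (defblock n x) \<or> mult_neutral M (defblock n x) \<or>
                (\<exists>k\<ge>1. multiplier M (defblock n x) = red M (replicate k Lam))}
            (Bn (loopsG1' M) n)" by blast
next
  have n: "n > 0" using assms by simp
  have b0: "bij_betw (defblock n) (Pn M n) (W M n)" using Pn_W[OF n] .
  have s2: "{y \<in> W M n. mult_negative M y \<or> mult_neutral M y \<or> multiplier M y \<in> Mrho M - {mone M}}
      = {\<alpha> \<in> W M n. cond2 M \<alpha>}" using cond2_iff by blast
  have "bij_betw (defblock n) {x \<in> Pn M n. mult_negative M (defblock n x) \<or> mult_neutral M (defblock n x) \<or>
                multiplier M (defblock n x) \<in> Mrho M - {mone M}} {\<alpha> \<in> W M n. cond2 M \<alpha>}"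
    using restrict_bij[OF b0, of "\<lambda>y. mult_negative M y \<or> mult_neutral M y \<or> multiplier M y \<in> Mrho M - {mone M}"]
    s2 by simp
  from bij_betw_trans[OF this bij2]
  show "\<exists>g. bij_betw g
            {x \<in> Pn M n. mult_negative M (defblock n x) \<or> mult_neutral M (defblock n x) \<or>
                multiplier M (defblock n x) \<in> Mrho M - {mone M}}
            (Bn (loopsG1'' M) n)" by blast
qed

end
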